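(* Let $N\ge 4$ and write $k(x)=2p(x)$. Then $p(N-2)=1$, $p(N-3)=0$, and for every $x\in\{0,\dots,N-4\}$, $$k(x)=\frac{(N-x)\,(N-x-1-k(x+1))}{(N-x-1)^2-k(x+1)}.$$ Moreover, for every $x\in\{0,\dots,N-2\}$, $2p(x)-1>0$ if $N-x$ is even and $2p(x)-1<0$ if $N-x$ is odd.
   Context: For $\sigma\in\mathcal{S}_N$, $\eta_1(\sigma)$ is the number of fixed points and $\eta_2(\sigma)$ the number of 2-cycles of $\sigma$; $\nu$ is the uniform measure on $\mathcal{S}_N$, and for $x\in\{0,\dots,N\}\setminus\{N-1\}$, $p(x)=\mathbb{E}_\nu[\eta_2\mid\eta_1=x]$. *)

theory Defs
  imports "HOL-Combinatorics.Permutations" Complex_Main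
begin

definition SymN :: "nat \<Rightarrow> (nat \<Rightarrow> nat) set" where
  "SymN N = {\<sigma>. \<sigma> permutes {1..N}}"

definition eta1 :: "nat \<Rightarrow> (nat \<Rightarrow> nat) \<Rightarrow> nat" where
  "eta1 N \<sigma> = card {i \<in> {1..N}. \<sigma> i = i}"

definition eta2 :: "nat \<Rightarrow> (nat \<Rightarrow> nat) \<Rightarrow> nat" where
  "eta2 N \<sigma> = card {{i, \<sigma> i} | i. i \<in> {1..N} \<and> \<sigma> i \<noteq> i \<and> \<sigma> (\<sigma> i) = i}"

text \<open>p(x) = E_nu[eta2 | eta1 = x] for nu the uniform measure on S_N:
  average of eta2 over the permutations with exactly x fixed points.\<close>
definition pcond :: "nat \<Rightarrow> nat \<Rightarrow> real" where
  "pcond N x = (\<Sum>\<sigma> \<in> {\<sigma> \<in> SymN N. eta1 N \<sigma> = x}. real (eta2 N \<sigma>))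
                 / real (card {\<sigma> \<in> SymN N. eta1 N \<sigma> = x})"

end

theory Submission
  imports Defs "HOL-Computational_Algebra.Formal_Power_Series"
begin


definition ee :: "nat \<Rightarrow> real" where
  "ee n = fact n * (\<Sum>j\<le>n. (-1)^j / fact j)"

lemma ee_binom: "(\<Sum>k\<le>n. real (n choose k) * ee k) = fact n"
proof -
  define E :: "real fps" where "E = fps_exp (-1) * Abs_fps (\<lambda>_. 1)"
  have EN: "fps_nth E k = ee k / fact k" for k
    unfolding E_def ee_def fps_mult_nth
    by (simp add: atLeast0AtMost power_minus' divide_simps)
  have "fps_exp 1 * E = Abs_fps (\<lambda>_. 1)"
    unfolding E_def by (simp add: mult.assoc[symmetric] fps_exp_add_mult[symmetric])
  hence "fps_nth (fps_exp 1 * E) n = 1" by simp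
  hence "(\<Sum>i=0..n. 1 / fact i * (ee (n - i) / fact (n - i))) = 1"
    by (simp add: fps_mult_nth EN)
  moreover have "(\<Sum>i=0..n. real (n choose i) * ee (n - i)) = (\<Sum>i=0..n. 1 / fact i * (ee (n - i) / fact (n - i))) * fact n"
    unfolding sum_distrib_right by (intro sum.cong refl) (simp add: binomial_fact)
  ultimately have "(\<Sum>i=0..n. real (n choose i) * ee (n - i)) = fact n" by simp
  also have "(\<Sum>i=0..n. real (n choose i) * ee (n - i)) = (\<Sum>k\<le>n. real (n choose k) * ee k)"
    by (rule sum.reindex_bij_witness[of _ "\<lambda>i. n-i" "\<lambda>i. n-i"])
       (auto simp: binomial_symmetric[symmetric])
  finally show ?thesis .
qed

lemma ee_rec: "ee (Suc n) = real (Suc n) * ee n + (-1)^(Suc n)"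
proof -
  have "fact (Suc n) * ((-1::real)^Suc n / fact (Suc n)) = (-1)^Suc n" by simp
  moreover have "(fact (Suc n)::real) = real (Suc n) * fact n" by simp
  ultimately show ?thesis unfolding ee_def by (simp only: sum.atMost_Suc distrib_left mult.assoc)
qed

lemma ee_unique:
  fixes d :: "nat \<Rightarrow> real"
  assumes "\<And>n. (\<Sum>k\<le>n. real (n choose k) * d k) = fact n"
  shows "d n = ee n"
proof (induction n rule: less_induct)
  case (less n)
  have "(\<Sum>k\<le>n. real (n choose k) * d k) = (\<Sum>k\<le>n. real (n choose k) * ee k)"
    using assms ee_binom by simp
  moreover have "(\<Sum>k<n. real (n choose k) * d k) = (\<Sum>k<n. real (n choose k) * ee k)"
    using less by simp
  ultimately show ?case by (simp add: lessThan_Suc_atMost[symmetric])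
qed



definition der :: "nat set \<Rightarrow> (nat \<Rightarrow> nat) set" where
  "der A = {\<pi>. \<pi> permutes A \<and> (\<forall>x\<in>A. \<pi> x \<noteq> x)}"

definition dn :: "nat \<Rightarrow> nat" where "dn n = card (der {..<n})"

lemma card_der: assumes "finite A" shows "card (der A) = dn (card A)"
proof -
  obtain f where "bij_betw f {..<card A} A"
    using finite_same_card_bij[of "{..<card A}" A] assms by auto
  from bij_betw_same_card[OF bij_betw_derangements[OF this]]
  show ?thesis unfolding dn_def der_def by simp
qed

definition cls :: "nat set \<Rightarrow> nat \<Rightarrow> (nat \<Rightarrow> nat) set" where
  "cls A x = {\<sigma>. \<sigma> permutes A \<and> card {i\<in>A. \<sigma> i = i} = x}"

lemma permutes_diff_fixed:
  assumes "p permutes A" "\<And>x. x \<in> B \<Longrightarrow> p x = x"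
  shows "p permutes (A - B)"
  using assms unfolding permutes_def by (metis Diff_iff)

lemma der_fixset:
  assumes "\<sigma> \<in> der (A - S)" "S \<subseteq> A"
  shows "{i\<in>A. \<sigma> i = i} = S"
  using assms unfolding der_def by (auto simp: permutes_not_in)

lemma cls_decomp:
  assumes "finite A"
  shows "cls A x = (\<Union>S\<in>{S. S \<subseteq> A \<and> card S = x}. der (A - S))"
proof
  show "cls A x \<subseteq> (\<Union>S\<in>{S. S \<subseteq> A \<and> card S = x}. der (A - S))"
  proof
    fix \<sigma> assume s: "\<sigma> \<in> cls A x"
    let ?S = "{i\<in>A. \<sigma> i = i}"
    have "\<sigma> permutes (A - ?S)" using s unfolding cls_def
      by (intro permutes_diff_fixed) auto
    hence "\<sigma> \<in> der (A - ?S)" unfolding der_def by auto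
    moreover have "?S \<in> {S. S \<subseteq> A \<and> card S = x}" using s unfolding cls_def by auto
    ultimately show "\<sigma> \<in> (\<Union>S\<in>{S. S \<subseteq> A \<and> card S = x}. der (A - S))"
      by blast
  qed
next
  show "(\<Union>S\<in>{S. S \<subseteq> A \<and> card S = x}. der (A - S)) \<subseteq> cls A x"
  proof
    fix \<sigma> assume "\<sigma> \<in> (\<Union>S\<in>{S. S \<subseteq> A \<and> card S = x}. der (A - S))"
    then obtain S where S: "S \<subseteq> A" "card S = x" "\<sigma> \<in> der (A - S)" by auto
    have "\<sigma> permutes A" using S(3) unfolding der_def
      by (auto intro: permutes_subset)
    thus "\<sigma> \<in> cls A x" using der_fixset[OF S(3,1)] S(2) unfolding cls_def by auto
  qed
qed

lemma finite_der: "finite A \<Longrightarrow> finite (der A)"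
  unfolding der_def by (rule finite_subset[OF _ finite_permutations]) auto

lemma card_cls:
  assumes "finite A"
  shows "card (cls A x) = (card A choose x) * dn (card A - x)"
proof -
  have "card (cls A x) = (\<Sum>S\<in>{S. S \<subseteq> A \<and> card S = x}. card (der (A - S)))"
    unfolding cls_decomp[OF assms]
  proof (rule card_UN_disjoint)
    show "finite {S. S \<subseteq> A \<and> card S = x}" using assms by auto
    show "\<forall>S\<in>{S. S \<subseteq> A \<and> card S = x}. finite (der (A - S))"
      using assms by (auto intro: finite_der)
    show "\<forall>S\<in>{S. S \<subseteq> A \<and> card S = x}. \<forall>T\<in>{S. S \<subseteq> A \<and> card S = x}. S \<noteq> T \<longrightarrow> der (A - S) \<inter> der (A - T) = {}"
    proof (intro ballI impI)
      fix S T assume ST: "S \<in> {S. S \<subseteq> A \<and> card S = x}" "T \<in> {S. S \<subseteq> A \<and> card S = x}" "S \<noteq> T"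
      show "der (A - S) \<inter> der (A - T) = {}"
      proof (rule ccontr)
        assume "der (A - S) \<inter> der (A - T) \<noteq> {}"
        then obtain \<sigma> where "\<sigma> \<in> der (A - S)" "\<sigma> \<in> der (A - T)" by blast
        with der_fixset ST have "S = T" by (metis (no_types, lifting) mem_Collect_eq)
        with ST show False by simp
      qed
    qed
  qed
  also have "\<dots> = (\<Sum>S\<in>{S. S \<subseteq> A \<and> card S = x}. dn (card A - x))"
    using assms by (intro sum.cong refl) (auto simp: card_der card_Diff_subset finite_subset)
  also have "\<dots> = (card A choose x) * dn (card A - x)"
    using n_subsets[OF assms] by simp
  finally show ?thesis .
qed

lemma cls_partition:
  assumes "finite A"
  shows "{\<sigma>. \<sigma> permutes A} = (\<Union>x\<in>{..card A}. cls A x)"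
proof -
  have "card {i\<in>A. \<sigma> i = i} \<le> card A" for \<sigma>
    using assms by (intro card_mono) auto
  thus ?thesis unfolding cls_def by auto
qed

lemma dn_binom: "(\<Sum>k\<le>n. (n choose k) * dn k) = fact n"
proof -
  let ?A = "{..<n}"
  have "fact n = card {\<sigma>. \<sigma> permutes ?A}" by (simp add: card_permutations)
  also have "\<dots> = (\<Sum>x\<le>n. card (cls ?A x))"
    unfolding cls_partition[OF finite_lessThan] card_lessThan
    by (rule card_UN_disjoint) (auto simp: cls_def intro: finite_subset[OF _ finite_permutations[OF finite_lessThan]])
  also have "\<dots> = (\<Sum>x\<le>n. (n choose x) * dn (n - x))"
    by (simp add: card_cls)
  also have "\<dots> = (\<Sum>k\<le>n. (n choose k) * dn k)"
    by (rule sum.reindex_bij_witness[of _ "\<lambda>i. n-i" "\<lambda>i. n-i"])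
       (auto simp: binomial_symmetric[symmetric])
  finally show ?thesis by simp
qed

lemma dn_ee: "real (dn n) = ee n"
proof (rule ee_unique)
  fix n show "(\<Sum>k\<le>n. real (n choose k) * real (dn k)) = fact n"
    using arg_cong[OF dn_binom[of n], of real] by simp
qed



definition pairs :: "nat set \<Rightarrow> nat set set" where "pairs A = {P. P \<subseteq> A \<and> card P = 2}"
definition sw :: "(nat \<Rightarrow> nat) \<Rightarrow> nat set \<Rightarrow> bool" where
  "sw \<sigma> P \<longleftrightarrow> (\<exists>i j. P = {i,j} \<and> i \<noteq> j \<and> \<sigma> i = j \<and> \<sigma> j = i)"

lemma eta2_set:
  assumes "\<sigma> permutes A"
  shows "{{i, \<sigma> i} | i. i \<in> A \<and> \<sigma> i \<noteq> i \<and> \<sigma> (\<sigma> i) = i} = {P \<in> pairs A. sw \<sigma> P}"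
proof (intro equalityI subsetI)
  fix P assume "P \<in> {{i, \<sigma> i} | i. i \<in> A \<and> \<sigma> i \<noteq> i \<and> \<sigma> (\<sigma> i) = i}"
  then obtain i where i: "P = {i, \<sigma> i}" "i \<in> A" "\<sigma> i \<noteq> i" "\<sigma> (\<sigma> i) = i"
    unfolding mem_Collect_eq by metis
  have "\<sigma> i \<in> A" using i(2) assms by (simp add: permutes_in_image)
  hence "P \<in> pairs A" using i unfolding pairs_def by auto
  moreover have "sw \<sigma> P" unfolding sw_def using i by metis
  ultimately show "P \<in> {P \<in> pairs A. sw \<sigma> P}" by simp
next
  fix P assume "P \<in> {P \<in> pairs A. sw \<sigma> P}"
  then obtain i j where P: "P = {i,j}" "i \<noteq> j" "\<sigma> i = j" "\<sigma> j = i" "P \<subseteq> A"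
    unfolding pairs_def sw_def mem_Collect_eq by metis
  hence "P = {i, \<sigma> i} \<and> i \<in> A \<and> \<sigma> i \<noteq> i \<and> \<sigma> (\<sigma> i) = i" by auto
  thus "P \<in> {{i, \<sigma> i} | i. i \<in> A \<and> \<sigma> i \<noteq> i \<and> \<sigma> (\<sigma> i) = i}" by blast
qed

lemma card_pairs: "finite A \<Longrightarrow> card (pairs A) = card A choose 2"
  unfolding pairs_def by (rule n_subsets)

lemma sum_card_swap:
  assumes "finite X" "finite Y"
  shows "(\<Sum>x\<in>X. card {y\<in>Y. R x y}) = (\<Sum>y\<in>Y. card {x\<in>X. R x y})"
proof -
  have c: "card {y\<in>Z. Q y} = (\<Sum>y\<in>Z. if Q y then 1 else 0)" if "finite Z" for Z and Q :: "'c \<Rightarrow> bool"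
    using sum.inter_filter[OF that, of "\<lambda>_. 1::nat" Q] by simp
  show ?thesis using assms by (simp add: c sum.swap[of _ X])
qed

lemma swap_count:
  assumes "finite A" "i \<in> A" "j \<in> A" "i \<noteq> j"
  shows "card {\<sigma>\<in>cls A x. sw \<sigma> {i,j}} = card (cls (A - {i,j}) x)"
proof -
  have sweq: "sw \<sigma> {i,j} \<longleftrightarrow> \<sigma> i = j \<and> \<sigma> j = i" for \<sigma>
    using assms(4) unfolding sw_def by (auto simp: doubleton_eq_iff)
  let ?t = "Transposition.transpose i j"
  have fixeq: "{k\<in>A - {i,j}. (?t \<circ> \<sigma>) k = k} = {k\<in>A. \<sigma> k = k}"
    if "\<sigma> permutes A" "\<sigma> i = j" "\<sigma> j = i" for \<sigma>
  proof -
    have "\<sigma> k \<noteq> i" "\<sigma> k \<noteq> j" if "k \<notin> {i,j}" for k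
      using that \<open>\<sigma> i = j\<close> \<open>\<sigma> j = i\<close> permutes_inj[OF \<open>\<sigma> permutes A\<close>]
      by (metis insertCI inj_eq)+
    thus ?thesis using that assms(4) by (auto simp: Transposition.transpose_def)
  qed
  have "bij_betw (\<lambda>\<sigma>. ?t \<circ> \<sigma>) {\<sigma>\<in>cls A x. sw \<sigma> {i,j}} (cls (A - {i,j}) x)"
  proof (rule bij_betw_byWitness[of _ "\<lambda>\<sigma>. ?t \<circ> \<sigma>"])
    show "\<forall>a\<in>{\<sigma> \<in> cls A x. sw \<sigma> {i, j}}. ?t \<circ> (?t \<circ> a) = a"
      by (simp add: fun_eq_iff)
    show "\<forall>a\<in>cls (A - {i, j}) x. ?t \<circ> (?t \<circ> a) = a"
      by (simp add: fun_eq_iff)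
    show "(\<lambda>\<sigma>. ?t \<circ> \<sigma>) ` {\<sigma> \<in> cls A x. sw \<sigma> {i, j}} \<subseteq> cls (A - {i, j}) x"
    proof safe
      fix \<sigma> assume s: "\<sigma> \<in> cls A x" "sw \<sigma> {i,j}"
      hence p: "\<sigma> permutes A" and ij: "\<sigma> i = j" "\<sigma> j = i" and c: "card {k\<in>A. \<sigma> k = k} = x"
        using sweq unfolding cls_def by auto
      have "?t \<circ> \<sigma> permutes A"
        using p assms by (intro permutes_compose permutes_swap_id) auto
      hence "?t \<circ> \<sigma> permutes (A - {i,j})"
        by (rule permutes_diff_fixed) (use ij in auto)
      thus "?t \<circ> \<sigma> \<in> cls (A - {i, j}) x"
        unfolding cls_def using fixeq[OF p ij] c by auto
    qed
    show "(\<lambda>\<sigma>. ?t \<circ> \<sigma>) ` cls (A - {i, j}) x \<subseteq> {\<sigma> \<in> cls A x. sw \<sigma> {i, j}}"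
    proof safe
      fix \<tau> assume t: "\<tau> \<in> cls (A - {i,j}) x"
      hence pt: "\<tau> permutes (A - {i,j})" and c: "card {k\<in>A - {i,j}. \<tau> k = k} = x"
        unfolding cls_def by auto
      have ti: "\<tau> i = i" "\<tau> j = j" using permutes_not_in[OF pt] by auto
      have "\<tau> permutes A" using pt by (rule permutes_subset) auto
      hence p: "?t \<circ> \<tau> permutes A"
        using assms by (intro permutes_compose permutes_swap_id) auto
      have ij: "(?t \<circ> \<tau>) i = j" "(?t \<circ> \<tau>) j = i" using ti by auto
      have "?t \<circ> (?t \<circ> \<tau>) = \<tau>" by (simp add: fun_eq_iff)
      hence "card {k\<in>A. (?t \<circ> \<tau>) k = k} = x" using fixeq[OF p ij] c by simp
      thus "?t \<circ> \<tau> \<in> cls A x" "sw (?t \<circ> \<tau>) {i,j}"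
        unfolding cls_def using p ij sweq by auto
    qed
  qed
  thus ?thesis by (rule bij_betw_same_card)
qed

lemma finite_cls: "finite A \<Longrightarrow> finite (cls A x)"
  unfolding cls_def by (rule finite_subset[OF _ finite_permutations]) auto

lemma sum_eta2:
  assumes "finite A" "card A = n"
  shows "(\<Sum>\<sigma>\<in>cls A x. card {{i, \<sigma> i} | i. i \<in> A \<and> \<sigma> i \<noteq> i \<and> \<sigma> (\<sigma> i) = i})
         = (n choose 2) * ((n - 2) choose x) * dn (n - 2 - x)"
proof -
  have "(\<Sum>\<sigma>\<in>cls A x. card {{i, \<sigma> i} | i. i \<in> A \<and> \<sigma> i \<noteq> i \<and> \<sigma> (\<sigma> i) = i})
      = (\<Sum>\<sigma>\<in>cls A x. card {P \<in> pairs A. sw \<sigma> P})"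
    by (intro sum.cong refl) (simp add: eta2_set cls_def)
  also have "\<dots> = (\<Sum>P\<in>pairs A. card {\<sigma> \<in> cls A x. sw \<sigma> P})"
    by (rule sum_card_swap) (use assms in \<open>auto simp: finite_cls pairs_def\<close>)
  also have "\<dots> = (\<Sum>P\<in>pairs A. ((n - 2) choose x) * dn (n - 2 - x))"
  proof (intro sum.cong refl)
    fix P assume "P \<in> pairs A"
    then obtain i j where P: "P = {i,j}" "i \<noteq> j" "i \<in> A" "j \<in> A"
      unfolding pairs_def by (auto simp: card_2_iff)
    have "card (A - {i,j}) = n - 2" using assms P by (simp add: card_Diff_subset)
    thus "card {\<sigma> \<in> cls A x. sw \<sigma> P} = ((n - 2) choose x) * dn (n - 2 - x)"
      using swap_count[OF assms(1) P(3,4,2)] card_cls[of "A - {i,j}" x] assms(1) P(1) by simp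
  qed
  also have "\<dots> = (n choose 2) * ((n - 2) choose x) * dn (n - 2 - x)"
    using card_pairs[OF assms(1)] assms(2) by simp
  finally show ?thesis .
qed

lemma pcond_eq:
  assumes "x + 2 \<le> N"
  shows "pcond N x = real ((N - x) choose 2) * real (dn (N - x - 2)) / real (dn (N - x))"
proof -
  have cl: "{\<sigma> \<in> SymN N. eta1 N \<sigma> = x} = cls {1..N} x"
    unfolding SymN_def eta1_def cls_def by auto
  have num: "(\<Sum>\<sigma> \<in> {\<sigma> \<in> SymN N. eta1 N \<sigma> = x}. eta2 N \<sigma>) = (N choose 2) * ((N - 2) choose x) * dn (N - 2 - x)"
    unfolding cl eta2_def by (rule sum_eta2) auto
  have den: "card {\<sigma> \<in> SymN N. eta1 N \<sigma> = x} = (N choose x) * dn (N - x)"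
    unfolding cl using card_cls[of "{1..N}" x] by simp
  have ch: "(N choose x) * ((N - x) choose 2) = (N choose 2) * ((N - 2) choose x)"
    using choose_mult[of x "x+2" N] choose_mult[of 2 "x+2" N] assms
    by (simp add: binomial_symmetric[of x "x+2", simplified] mult.commute)
  have pos: "(N choose x) > 0" using assms by simp
  have "pcond N x = real ((N choose x) * ((N - x) choose 2) * dn (N - x - 2)) / real ((N choose x) * dn (N - x))"
    unfolding pcond_def of_nat_sum[symmetric] num den ch by (simp add: diff_commute)
  also have "\<dots> = real ((N - x) choose 2) * real (dn (N - x - 2)) / real (dn (N - x))"
    using pos by simp
  finally show ?thesis .
qed



lemma ee0: "ee 0 = 1" by (simp add: ee_def)
lemma ee1': "ee (Suc 0) = 0" using ee_rec[of 0] by (simp add: ee0)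
lemma ee2': "ee (Suc (Suc 0)) = 1" using ee_rec[of "Suc 0"] by (simp add: ee1')
lemma ee1: "ee 1 = 0" using ee1' by simp
lemma ee2: "ee 2 = 1" using ee2' by (simp add: numeral_2_eq_2)

lemma ee_rec2: "ee (n + 2) = real (n + 1) * (ee (n + 1) + ee n)"
proof -
  have h2: "ee (n + 2) = real (n+2) * ee (n+1) + (-1)^n"
    using ee_rec[of "n+1"] by simp
  have h1: "ee (n + 1) = real (n+1) * ee n - (-1)^n" using ee_rec[of n] by simp
  show ?thesis unfolding h2 by (subst (1 2) h1) (simp add: algebra_simps)
qed

lemma ee_ge1: "ee (n + 2) \<ge> 1"
proof (induction n)
  case 0 thus ?case using ee2' by simp
next
  case (Suc n)
  have "ee (Suc n + 2) = real (Suc n + 2) * ee (n + 2) + (-1)^(Suc n + 2)"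
    using ee_rec[of "n+2"] by simp
  moreover have "(-1::real)^(Suc n + 2) \<ge> -1" by (cases "even n") auto
  moreover have "real (Suc n + 2) * ee (n + 2) \<ge> real (Suc n + 2) * 1"
    using Suc by (intro mult_left_mono) auto
  moreover have "real (Suc n + 2) \<ge> 3" by simp
  moreover have "\<And>e' a e s::real. e' = a*e + s \<Longrightarrow> s \<ge> -1 \<Longrightarrow> a * 1 \<le> a*e \<Longrightarrow> a \<ge> 3 \<Longrightarrow> e' \<ge> 1"
    by linarith
  ultimately show ?case by blast
qed

lemma ee_sign: "real ((j+2)*(j+1)) * ee j - ee (j + 2) = real (j + 1) * (-1)^j"
proof -
  have h2: "ee (j + 2) = real (j+2) * ee (j+1) + (-1)^j"
    using ee_rec[of "j+1"] by simp
  have h1: "ee (j + 1) = real (j+1) * ee j - (-1)^j" using ee_rec[of j] by simp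
  show ?thesis unfolding h2 h1 by (simp add: algebra_simps)
qed

lemma choose2_real: "real ((j + 2) choose 2) = real (j+2) * real (j+1) / 2"
  by (induction j) (simp_all add: field_simps numeral_2_eq_2)

lemma kval:
  assumes "N - x = j + 2"
  shows "2 * pcond N x = real ((j + 2) * (j + 1)) * ee j / ee (j + 2)"
proof -
  have a: "x + 2 \<le> N" and b: "N - x - 2 = j" using assms by auto
  show ?thesis
    unfolding pcond_eq[OF a] dn_ee assms b choose2_real by (cases "ee (j+2) = 0") (simp_all add: field_simps)
qed



lemma alg:
  fixes t a b c :: real
  assumes t: "t \<ge> 0" and ha: "a = (t+2)*(b+c)" and a1: "a \<ge> 1" and b1: "b \<ge> 1"
  shows "(t+4)*(t+3)*b/((t+3)*(a+b))
       = (t+4)*((t+4) - 1 - (t+3)*(t+2)*c/a)/(((t+4)-1)^2 - (t+3)*(t+2)*c/a)"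
proof -
  define P where "P = (t+3)*(t+2)"
  have a0: "a \<noteq> 0" using a1 by simp
  have P0: "P \<noteq> 0" using t unfolding P_def by simp
  have ab0: "a + b \<noteq> 0" using a1 b1 by simp
  have t3: "t + 3 \<noteq> 0" using t by simp
  have hc: "(t+3)*(t+2)*c/a = (t+3) - P*b/a"
  proof -
    have "(t+2)*c = a - (t+2)*b" using ha by (simp add: algebra_simps)
    hence "(t+3)*(t+2)*c = (t+3)*(a - (t+2)*b)" by (simp only: mult.assoc)
    thus ?thesis using a0 unfolding P_def by (simp add: field_simps)
  qed
  have e1: "(t+4) - 1 - (t+3)*(t+2)*c/a = P*b/a" unfolding hc by simp
  have e2: "((t+4)-1)^2 - (t+3)*(t+2)*c/a = P*(a+b)/a"
    unfolding hc using a0 by (simp add: P_def field_simps power2_eq_square)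
  have pab: "P*a + P*b \<noteq> 0" using P0 ab0 by (simp add: distrib_left[symmetric])
  have r: "(P*b/a)/(P*(a+b)/a) = b/(a+b)" using a0 P0 ab0 pab by (simp add: field_simps)
  have l: "(t+4)*(t+3)*b/((t+3)*(a+b)) = (t+4)*(b/(a+b))"
  proof -
    have "(t+4)*(t+3)*b = (t+3)*((t+4)*b)" by (simp add: algebra_simps)
    hence "(t+4)*(t+3)*b/((t+3)*(a+b)) = ((t+4)*b)/(a+b)"
      by (simp only: mult_divide_mult_cancel_left[OF t3])
    thus ?thesis by simp
  qed
  have "(t+4)*(P*b/a)/(P*(a+b)/a) = (t+4)*((P*b/a)/(P*(a+b)/a))"
    by (rule times_divide_eq_right[symmetric])
  thus ?thesis unfolding e1 e2 l r by simp
qed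

theorem mainTheorem6:
  fixes N :: nat and k :: "nat \<Rightarrow> real"
  assumes "N \<ge> 4"
    and k_def: "\<And>x. k x = 2 * pcond N x"
  shows "pcond N (N - 2) = 1 \<and> pcond N (N - 3) = 0
    \<and> (\<forall>x \<le> N - 4. k x = real (N - x) * (real (N - x) - 1 - k (x + 1))
                           / ((real (N - x) - 1)^2 - k (x + 1)))
    \<and> (\<forall>x \<le> N - 2. (even (N - x) \<longrightarrow> 2 * pcond N x - 1 > 0)
                    \<and> (odd (N - x) \<longrightarrow> 2 * pcond N x - 1 < 0))"
proof (intro conjI allI impI)
  have "2 * pcond N (N - 2) = real ((0 + 2) * (0 + 1)) * ee 0 / ee (0 + 2)"
    by (rule kval) (use assms(1) in auto)
  thus "pcond N (N - 2) = 1" by (simp add: ee0 ee2')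
  have "2 * pcond N (N - 3) = real ((1 + 2) * (1 + 1)) * ee 1 / ee (1 + 2)"
    by (rule kval) (use assms(1) in auto)
  thus "pcond N (N - 3) = 0" by (simp add: ee1')
next
  fix x assume x: "x \<le> N - 4"
  define j where "j = N - x - 4"
  have kx: "k x = real ((j + 2 + 2) * (j + 2 + 1)) * ee (j + 2) / ee (j + 2 + 2)"
    unfolding k_def by (rule kval) (use x assms(1) in \<open>auto simp: j_def\<close>)
  have kx1: "k (x + 1) = real ((j + 1 + 2) * (j + 1 + 1)) * ee (j + 1) / ee (j + 1 + 2)"
    unfolding k_def by (rule kval) (use x assms(1) in \<open>auto simp: j_def\<close>)
  have nx: "real (N - x) = real j + 4" using x assms(1) by (simp add: j_def)
  have ha: "ee (j + 3) = (real j + 2) * (ee (j + 2) + ee (j + 1))"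
    using ee_rec2[of "j+1"] by (simp add: add.commute eval_nat_numeral)
  have hb: "ee (j + 4) = (real j + 3) * (ee (j + 3) + ee (j + 2))"
    using ee_rec2[of "j+2"] by (simp add: add.commute eval_nat_numeral)
  have a1: "ee (j + 3) \<ge> 1" using ee_ge1[of "j+1"] by (simp add: add.commute eval_nat_numeral)
  have b1: "ee (j + 2) \<ge> 1" using ee_ge1[of j] by (simp add: add.commute eval_nat_numeral)
  have "(real j+4)*(real j+3)*ee (j+2)/((real j+3)*(ee (j+3)+ee (j+2)))
       = (real j+4)*((real j+4) - 1 - (real j+3)*(real j+2)*ee (j+1)/ee (j+3))
         /(((real j+4)-1)^2 - (real j+3)*(real j+2)*ee (j+1)/ee (j+3))"
    by (rule alg[OF _ ha a1 b1]) simp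
  moreover have "k x = (real j+4)*(real j+3)*ee (j+2)/((real j+3)*(ee (j+3)+ee (j+2)))"
  proof -
    have "k x = (real j+4)*(real j+3)*ee (j+2)/ee (j+4)"
      using kx by (simp add: eval_nat_numeral algebra_simps)
    from this[unfolded hb] show ?thesis .
  qed
  moreover have "k (x+1) = (real j+3)*(real j+2)*ee (j+1)/ee (j+3)"
    using kx1 by (simp add: eval_nat_numeral algebra_simps)
  ultimately show "k x = real (N - x) * (real (N - x) - 1 - k (x + 1))
                           / ((real (N - x) - 1)^2 - k (x + 1))"
    unfolding nx by simp
next
  fix x assume x: "x \<le> N - 2"
  define j where "j = N - x - 2"
  have nx: "N - x = j + 2" using x assms(1) by (simp add: j_def)
  have kx: "2 * pcond N x = real ((j + 2) * (j + 1)) * ee j / ee (j + 2)"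
    by (rule kval[OF nx])
  have pos: "ee (j+2) \<ge> 1" by (rule ee_ge1)
  have eq: "2 * pcond N x - 1 = real (j + 1) * (-1)^j / ee (j + 2)"
    unfolding kx ee_sign[symmetric] using pos by (simp add: field_simps)
  {
    assume "even (N - x)"
    hence "even j" using nx by simp
    thus "2 * pcond N x - 1 > 0" unfolding eq using pos by simp
  }
  {
    assume "odd (N - x)"
    hence "odd j" using nx by simp
    thus "2 * pcond N x - 1 < 0" unfolding eq using pos by (simp add: divide_neg_pos)
  }
qed


end
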